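(* Any discrete quasigroup, and in particular any discrete group, is approximable by finite quasigroups.
   Context: A quasigroup is a set $A$ with a binary operation $\circ$ such that for all $a,b\in A$ each of the equations $a\circ x=b$ and $x\circ a=b$ has a unique solution. $A$ carries the discrete topology. Approximability of a topological algebra $(A,\circ)$ by a class $\mathcal K$ of finite algebras: for a compact $C\subseteq A$, a finite cover $\mathcal U$ of $C$ by open sets, and a finite algebra $(H,\odot)$, a map $j:H\to A$ gives a $(C,\mathcal U)$-approximation if (i) every $U\in\mathcal U$ with $U\cap C\ne\emptyset$ contains a point of $j(H)$, and (ii) for all $x,y\in H$ with $j(x),j(y),j(x)\circ j(y)\in C$ there is $U\in\mathcal U$ containing both $j(x\odot y)$ and $j(x)\circ j(y)$; $A$ is approximable by $\mathcal K$ if for every compact $C$ and finite open cover $\mathcal U$ of $C$ there is a $(C,\mathcal U)$-approximation $(H,j)$ with $H\in\mathcal K$ and $j$ injective. *)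

theory Defs
  imports "HOL-Analysis.Analysis"
begin

definition quasigroup_on :: "'a set \<Rightarrow> ('a \<Rightarrow> 'a \<Rightarrow> 'a) \<Rightarrow> bool" where
  "quasigroup_on A f \<longleftrightarrow>
     (\<forall>a\<in>A. \<forall>b\<in>A. f a b \<in> A) \<and>
     (\<forall>a\<in>A. \<forall>b\<in>A. \<exists>!x. x \<in> A \<and> f a x = b) \<and>
     (\<forall>a\<in>A. \<forall>b\<in>A. \<exists>!x. x \<in> A \<and> f x a = b)"

definition is_approximation ::
  "'a topology \<Rightarrow> ('a \<Rightarrow> 'a \<Rightarrow> 'a) \<Rightarrow> 'a set \<Rightarrow> 'a set set \<Rightarrow>
   'h set \<Rightarrow> ('h \<Rightarrow> 'h \<Rightarrow> 'h) \<Rightarrow> ('h \<Rightarrow> 'a) \<Rightarrow> bool" where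
  "is_approximation T f C \<U> H g j \<longleftrightarrow>
     j ` H \<subseteq> topspace T \<and>
     (\<forall>U\<in>\<U>. U \<inter> C \<noteq> {} \<longrightarrow> (\<exists>x\<in>H. j x \<in> U)) \<and>
     (\<forall>x\<in>H. \<forall>y\<in>H. j x \<in> C \<and> j y \<in> C \<and> f (j x) (j y) \<in> C \<longrightarrow>
        (\<exists>U\<in>\<U>. j (g x y) \<in> U \<and> f (j x) (j y) \<in> U))"

text \<open>Approximability by a class K of finite algebras. Finite algebras are represented
  with carriers that are (finite) sets of natural numbers; every finite algebra is
  isomorphic to such a one.\<close>
definition approximable_by ::
  "'a topology \<Rightarrow> ('a \<Rightarrow> 'a \<Rightarrow> 'a) \<Rightarrow> (nat set \<Rightarrow> (nat \<Rightarrow> nat \<Rightarrow> nat) \<Rightarrow> bool) \<Rightarrow> bool" where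
  "approximable_by T f K \<longleftrightarrow>
     (\<forall>C \<U>. compactin T C \<and> finite \<U> \<and> (\<forall>U\<in>\<U>. openin T U) \<and> C \<subseteq> \<Union>\<U> \<longrightarrow>
        (\<exists>H g j. K H g \<and> finite H \<and> inj_on j H \<and> is_approximation T f C \<U> H g j))"

definition finite_quasigroup :: "nat set \<Rightarrow> (nat \<Rightarrow> nat \<Rightarrow> nat) \<Rightarrow> bool" where
  "finite_quasigroup H g \<longleftrightarrow> finite H \<and> quasigroup_on H g"

end

theory Submission
  imports Defs
begin

lemma transfer_approx:
  fixes G :: "'b set" and q :: "'b \<Rightarrow> 'b \<Rightarrow> 'b" and J :: "'b \<Rightarrow> 'a" and f :: "'a \<Rightarrow> 'a \<Rightarrow> 'a"
  assumes fin: "finite G" and qg: "quasigroup_on G q" and inj: "inj_on J G"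
    and CJ: "C \<subseteq> J ` G" and CU: "C \<subseteq> \<Union>\<U>"
    and compat: "\<And>x y. x \<in> G \<Longrightarrow> y \<in> G \<Longrightarrow> J x \<in> C \<Longrightarrow> J y \<in> C \<Longrightarrow> f (J x) (J y) \<in> C
       \<Longrightarrow> J (q x y) = f (J x) (J y)"
  shows "\<exists>H g j. finite_quasigroup H g \<and> finite H \<and> inj_on j H \<and>
           is_approximation (discrete_topology UNIV) f C \<U> H g j"
proof -
  define N where "N = {0..<card G}"
  obtain \<phi> where bij: "bij_betw \<phi> N G" unfolding N_def using ex_bij_betw_nat_finite[OF fin] by blast
  define \<psi> where "\<psi> = inv_into N \<phi>"
  have bij2: "bij_betw \<psi> G N" unfolding \<psi>_def using bij by (rule bij_betw_inv_into)
  have pp: "\<phi> (\<psi> z) = z" if "z \<in> G" for z unfolding \<psi>_def using bij that by (meson bij_betw_inv_into_right)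
  have qq: "\<psi> (\<phi> x) = x" if "x \<in> N" for x unfolding \<psi>_def using bij that by (meson bij_betw_inv_into_left)
  have phiG: "\<phi> x \<in> G" if "x \<in> N" for x using bij that by (meson bij_betw_apply)
  have psiN: "\<psi> z \<in> N" if "z \<in> G" for z using bij2 that by (meson bij_betw_apply)
  define g where "g x y = \<psi> (q (\<phi> x) (\<phi> y))" for x y
  define j where "j = J \<circ> \<phi>"
  note qs = qg[unfolded quasigroup_on_def]
  have qcl: "q x y \<in> G" if "x \<in> G" "y \<in> G" for x y using conjunct1[OF qs] that by blast
  have qL: "\<exists>!x. x \<in> G \<and> q a x = b" if "a \<in> G" "b \<in> G" for a b
    by (rule conjunct1[OF conjunct2[OF qs], rule_format, OF that])
  have qR: "\<exists>!x. x \<in> G \<and> q x a = b" if "a \<in> G" "b \<in> G" for a b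
    by (rule conjunct2[OF conjunct2[OF qs], rule_format, OF that])
  have eqv: "g a x = b \<longleftrightarrow> q (\<phi> a) (\<phi> x) = \<phi> b" if "a \<in> N" "x \<in> N" "b \<in> N" for a x b
    unfolding g_def using that by (metis phiG pp qq qcl)
  have "quasigroup_on N g"
    unfolding quasigroup_on_def
  proof (intro conjI ballI)
    fix a b assume ab: "a \<in> N" "b \<in> N"
    show "g a b \<in> N" unfolding g_def using ab phiG psiN qcl by blast
    obtain y where y: "y \<in> G" "q (\<phi> a) y = \<phi> b" and yu: "\<And>y'. y' \<in> G \<Longrightarrow> q (\<phi> a) y' = \<phi> b \<Longrightarrow> y' = y"
      using qL[OF phiG[OF ab(1)] phiG[OF ab(2)]] by blast
    show "\<exists>!x. x \<in> N \<and> g a x = b"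
    proof (rule ex1I[of _ "\<psi> y"])
      show "\<psi> y \<in> N \<and> g a (\<psi> y) = b" using eqv ab y psiN pp by auto
      fix x assume "x \<in> N \<and> g a x = b"
      then show "x = \<psi> y" using eqv ab yu phiG qq by metis
    qed
    obtain y where y: "y \<in> G" "q y (\<phi> a) = \<phi> b" and yu: "\<And>y'. y' \<in> G \<Longrightarrow> q y' (\<phi> a) = \<phi> b \<Longrightarrow> y' = y"
      using qR[OF phiG[OF ab(1)] phiG[OF ab(2)]] by blast
    show "\<exists>!x. x \<in> N \<and> g x a = b"
    proof (rule ex1I[of _ "\<psi> y"])
      show "\<psi> y \<in> N \<and> g (\<psi> y) a = b" using eqv ab y psiN pp by auto
      fix x assume "x \<in> N \<and> g x a = b"
      then show "x = \<psi> y" using eqv ab yu phiG qq by metis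
    qed
  qed
  moreover have "finite N" unfolding N_def by simp
  moreover have "inj_on j N" unfolding j_def using bij inj
    by (metis bij_betw_def comp_inj_on)
  moreover have "is_approximation (discrete_topology UNIV) f C \<U> N g j"
    unfolding is_approximation_def
  proof (intro conjI ballI impI)
    show "j ` N \<subseteq> topspace (discrete_topology UNIV)" by simp
  next
    fix U assume "U \<in> \<U>" "U \<inter> C \<noteq> {}"
    then obtain c where c: "c \<in> U" "c \<in> C" by blast
    then obtain z where z: "z \<in> G" "c = J z" using CJ by blast
    show "\<exists>x\<in>N. j x \<in> U" using c z psiN pp unfolding j_def by (metis comp_apply)
  next
    fix x y assume xy: "x \<in> N" "y \<in> N" and h: "j x \<in> C \<and> j y \<in> C \<and> f (j x) (j y) \<in> C"
    have "j (g x y) = f (j x) (j y)"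
      using compat[OF phiG[OF xy(1)] phiG[OF xy(2)]] h unfolding j_def g_def
      using pp qcl phiG xy by simp
    then show "\<exists>U\<in>\<U>. j (g x y) \<in> U \<and> f (j x) (j y) \<in> U" using h CU by auto
  qed
  ultimately show ?thesis unfolding finite_quasigroup_def by blast
qed


datatype 'a crd = Rw 'a | Kl 'a | Sy 'a

definition xr :: "'b set \<Rightarrow> 'b set \<Rightarrow> 'b set" where "xr A B = (A - B) \<union> (B - A)"

lemma xr_simps: "xr A {} = A" "xr (xr A B) B = A" "xr A A = {}"
  "xr (xr A B) E = xr A (xr B E)" "xr A (xr A B) = B"
  unfolding xr_def by auto
lemma xr_comm: "xr A B = xr B A" unfolding xr_def by auto

lemma xr_sub: "A \<subseteq> W \<Longrightarrow> B \<subseteq> W \<Longrightarrow> xr A B \<subseteq> W" unfolding xr_def by auto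

definition WW :: "'a set \<Rightarrow> 'a crd set" where "WW C = Rw ` C \<union> Kl ` C \<union> Sy ` C"
definition DD :: "('a \<Rightarrow> 'a \<Rightarrow> 'a) \<Rightarrow> 'a set \<Rightarrow> ('a \<times> 'a) set" where
  "DD f C = {(a,b). a \<in> C \<and> b \<in> C \<and> f a b \<in> C}"
definition Dl :: "('a \<Rightarrow> 'a \<Rightarrow> 'a) \<Rightarrow> 'a \<times> 'a \<Rightarrow> 'a crd set" where
  "Dl f p = {Rw (fst p), Kl (snd p), Sy (f (fst p) (snd p))}"
definition mt :: "('a \<Rightarrow> 'a \<Rightarrow> 'a) \<Rightarrow> 'a \<times> 'a \<Rightarrow> 'a crd set \<Rightarrow> 'a crd set \<Rightarrow> bool" where
  "mt f p r c \<longleftrightarrow> (r = {Rw (fst p)} \<or> r = {Kl (snd p), Sy (f (fst p) (snd p))}) \<and>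
                  (c = {Kl (snd p)} \<or> c = {Rw (fst p), Sy (f (fst p) (snd p))})"
definition eps :: "('a \<Rightarrow> 'a \<Rightarrow> 'a) \<Rightarrow> 'a set \<Rightarrow> 'a crd set \<Rightarrow> 'a crd set \<Rightarrow> 'a crd set" where
  "eps f C r c = (if \<exists>p\<in>DD f C. mt f p r c then Dl f (SOME p. p \<in> DD f C \<and> mt f p r c) else {})"
definition LL :: "('a \<Rightarrow> 'a \<Rightarrow> 'a) \<Rightarrow> 'a set \<Rightarrow> 'a crd set \<Rightarrow> 'a crd set \<Rightarrow> 'a crd set" where
  "LL f C r c = xr (xr r c) (eps f C r c)"

locale qsetup =
  fixes f :: "'a \<Rightarrow> 'a \<Rightarrow> 'a" and C :: "'a set"
  assumes rinj: "\<And>a b b'. f a b = f a b' \<Longrightarrow> b = b'"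
      and cinj: "\<And>a a' b. f a b = f a' b \<Longrightarrow> a = a'"
begin

lemma mt_uniq:
  assumes "mt f p r c" "mt f p' r c" shows "p = p'"
proof -
  obtain a b where p: "p = (a,b)" by force
  obtain a' b' where p': "p' = (a',b')" by force
  have m1: "(r = {Rw a} \<or> r = {Kl b, Sy (f a b)}) \<and> (c = {Kl b} \<or> c = {Rw a, Sy (f a b)})"
    using assms(1) unfolding p mt_def by simp
  have m2: "(r = {Rw a'} \<or> r = {Kl b', Sy (f a' b')}) \<and> (c = {Kl b'} \<or> c = {Rw a', Sy (f a' b')})"
    using assms(2) unfolding p' mt_def by simp
  have "a = a' \<and> b = b'"
  proof (cases "r = {Rw a}")
    case True
    then have "a = a'" using m2 by (auto simp: doubleton_eq_iff)
    moreover have "b = b'"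
    proof (cases "c = {Kl b}")
      case True then show ?thesis using m2 by (auto simp: doubleton_eq_iff)
    next
      case False
      then have "c = {Rw a, Sy (f a b)}" using m1 by blast
      then have "f a b = f a b'" using m2 \<open>a = a'\<close> by (auto simp: doubleton_eq_iff)
      then show ?thesis using rinj by blast
    qed
    ultimately show ?thesis by simp
  next
    case False
    then have r: "r = {Kl b, Sy (f a b)}" using m1 by blast
    then have "r = {Kl b', Sy (f a' b')}" using m2 by (auto simp: doubleton_eq_iff)
    then have "b = b'" "f a b = f a' b'" using r by (auto simp: doubleton_eq_iff)
    then show ?thesis using cinj by blast
  qed
  then show ?thesis unfolding p p' by simp
qed

lemma eps_eq: assumes "p \<in> DD f C" "mt f p r c" shows "eps f C r c = Dl f p"
proof -
  have "(SOME p. p \<in> DD f C \<and> mt f p r c) = p"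
    apply (rule some_equality)
    using assms apply blast
    using assms mt_uniq by blast
  then show ?thesis unfolding eps_def using assms by auto
qed

lemma eps_none: assumes "\<not> (\<exists>p\<in>DD f C. mt f p r c)" shows "eps f C r c = {}"
  using assms unfolding eps_def by auto

lemma mt_shift_c: "mt f p r c \<Longrightarrow> mt f p r (xr c (Dl f p))"
  unfolding mt_def Dl_def xr_def by auto
lemma mt_shift_r: "mt f p r c \<Longrightarrow> mt f p (xr r (Dl f p)) c"
  unfolding mt_def Dl_def xr_def by auto

lemma eps_c: "eps f C r (xr c (eps f C r c)) = eps f C r c"
proof (cases "\<exists>p\<in>DD f C. mt f p r c")
  case True
  then obtain p where p: "p \<in> DD f C" "mt f p r c" by blast
  then show ?thesis using eps_eq[OF p] eps_eq[OF p(1) mt_shift_c[OF p(2)]] by simp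
next
  case False
  then show ?thesis using eps_none by (simp add: xr_simps)
qed

lemma eps_r: "eps f C (xr r (eps f C r c)) c = eps f C r c"
proof (cases "\<exists>p\<in>DD f C. mt f p r c")
  case True
  then obtain p where p: "p \<in> DD f C" "mt f p r c" by blast
  then show ?thesis using eps_eq[OF p] eps_eq[OF p(1) mt_shift_r[OF p(2)]] by simp
next
  case False
  then show ?thesis using eps_none by (simp add: xr_simps)
qed

lemma Dl_sub: "p \<in> DD f C \<Longrightarrow> Dl f p \<subseteq> WW C"
  unfolding Dl_def DD_def WW_def by (cases p) auto

lemma eps_sub: "eps f C r c \<subseteq> WW C"
proof (cases "\<exists>p\<in>DD f C. mt f p r c")
  case True
  then have "(SOME p. p \<in> DD f C \<and> mt f p r c) \<in> DD f C" by (metis (mono_tags, lifting) someI_ex)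
  then show ?thesis unfolding eps_def using True Dl_sub by simp
next
  case False then show ?thesis using eps_none by simp
qed

lemma LL_row: "LL f C r c = xr r (xr c (eps f C r c))"
  unfolding LL_def xr_def by blast
lemma LL_col: "LL f C r c = xr (xr r (eps f C r c)) c"
  unfolding LL_def xr_simps(4) using xr_comm[of c "eps f C r c"] by simp

lemma LL_quasi: "quasigroup_on (Pow (WW C)) (LL f C)"
  unfolding quasigroup_on_def
proof (intro conjI ballI)
  fix a b assume ab: "a \<in> Pow (WW C)" "b \<in> Pow (WW C)"
  show "LL f C a b \<in> Pow (WW C)" unfolding LL_def using ab by (intro PowI xr_sub eps_sub) auto
  let ?y = "xr (xr a b) (eps f C a (xr a b))"
  show "\<exists>!x. x \<in> Pow (WW C) \<and> LL f C a x = b"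
  proof (rule ex1I[of _ ?y])
    have e: "eps f C a ?y = eps f C a (xr a b)" by (rule eps_c)
    have "LL f C a ?y = b" unfolding LL_row e by (simp add: xr_simps)
    moreover have "?y \<in> Pow (WW C)" using ab by (intro PowI xr_sub eps_sub) auto
    ultimately show "?y \<in> Pow (WW C) \<and> LL f C a ?y = b" by blast
    fix x assume "x \<in> Pow (WW C) \<and> LL f C a x = b"
    then have hb: "b = xr a (xr x (eps f C a x))" unfolding LL_row by simp
    have h: "xr x (eps f C a x) = xr a b" unfolding hb by (simp add: xr_simps)
    have e2: "eps f C a (xr a b) = eps f C a x" unfolding h[symmetric] by (rule eps_c)
    have "x = xr (xr x (eps f C a x)) (eps f C a x)" by (simp add: xr_simps)
    also have "\<dots> = ?y" unfolding h e2 ..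
    finally show "x = ?y" .
  qed
  let ?z = "xr (xr b a) (eps f C (xr b a) a)"
  show "\<exists>!x. x \<in> Pow (WW C) \<and> LL f C x a = b"
  proof (rule ex1I[of _ ?z])
    have e: "eps f C ?z a = eps f C (xr b a) a" by (rule eps_r)
    have "LL f C ?z a = b" unfolding LL_col e by (simp add: xr_simps)
    moreover have "?z \<in> Pow (WW C)" using ab by (intro PowI xr_sub eps_sub) auto
    ultimately show "?z \<in> Pow (WW C) \<and> LL f C ?z a = b" by blast
    fix x assume "x \<in> Pow (WW C) \<and> LL f C x a = b"
    then have hb: "b = xr (xr x (eps f C x a)) a" unfolding LL_col by simp
    have h: "xr x (eps f C x a) = xr b a" unfolding hb by (simp only: xr_simps(2))
    have e2: "eps f C (xr b a) a = eps f C x a" unfolding h[symmetric] by (rule eps_r)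
    have "x = xr (xr x (eps f C x a)) (eps f C x a)" by (simp add: xr_simps)
    also have "\<dots> = ?z" unfolding h e2 ..
    finally show "x = ?z" .
  qed
qed

lemma LL_val: assumes "a \<in> C" "b \<in> C" "f a b \<in> C"
  shows "LL f C {Rw a} {Kl b} = {Sy (f a b)}"
proof -
  have "(a,b) \<in> DD f C" "mt f (a,b) {Rw a} {Kl b}" using assms unfolding DD_def mt_def by auto
  from eps_eq[OF this] show ?thesis unfolding LL_def Dl_def xr_def by auto
qed

end


lemma isotope_quasi:
  assumes q: "quasigroup_on G q" and aG: "\<And>x. x \<in> G \<Longrightarrow> \<alpha> x \<in> G" and bG: "\<And>x. x \<in> G \<Longrightarrow> \<beta> x \<in> G"
    and aa: "\<And>x. \<alpha> (\<alpha> x) = x" and bb: "\<And>x. \<beta> (\<beta> x) = x"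
  shows "quasigroup_on G (\<lambda>x y. q (\<alpha> x) (\<beta> y))"
  unfolding quasigroup_on_def
proof (intro conjI ballI)
  fix a b assume ab: "a \<in> G" "b \<in> G"
  show "q (\<alpha> a) (\<beta> b) \<in> G" using conjunct1[OF q[unfolded quasigroup_on_def]] ab aG bG by blast
  note qs = q[unfolded quasigroup_on_def]
  obtain y where y: "y \<in> G" "q (\<alpha> a) y = b" and yu: "\<And>y'. y' \<in> G \<Longrightarrow> q (\<alpha> a) y' = b \<Longrightarrow> y' = y"
    using conjunct1[OF conjunct2[OF qs], rule_format, OF aG[OF ab(1)] ab(2)] by blast
  show "\<exists>!x. x \<in> G \<and> q (\<alpha> a) (\<beta> x) = b"
  proof (rule ex1I[of _ "\<beta> y"])
    show "\<beta> y \<in> G \<and> q (\<alpha> a) (\<beta> (\<beta> y)) = b" using y bG bb by simp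
    fix x assume "x \<in> G \<and> q (\<alpha> a) (\<beta> x) = b"
    then have "\<beta> x = y" using yu bG by blast
    then show "x = \<beta> y" using bb by metis
  qed
  obtain y where y: "y \<in> G" "q y (\<beta> a) = b" and yu: "\<And>y'. y' \<in> G \<Longrightarrow> q y' (\<beta> a) = b \<Longrightarrow> y' = y"
    using conjunct2[OF conjunct2[OF qs], rule_format, OF bG[OF ab(1)] ab(2)] by blast
  show "\<exists>!x. x \<in> G \<and> q (\<alpha> x) (\<beta> a) = b"
  proof (rule ex1I[of _ "\<alpha> y"])
    show "\<alpha> y \<in> G \<and> q (\<alpha> (\<alpha> y)) (\<beta> a) = b" using y aG aa by simp
    fix x assume "x \<in> G \<and> q (\<alpha> x) (\<beta> a) = b"
    then have "\<alpha> x = y" using yu aG by blast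
    then show "x = \<alpha> y" using aa by metis
  qed
qed

fun swRS :: "'a crd \<Rightarrow> 'a crd" where
  "swRS (Rw a) = Sy a" | "swRS (Kl a) = Kl a" | "swRS (Sy a) = Rw a"
fun swKS :: "'a crd \<Rightarrow> 'a crd" where
  "swKS (Rw a) = Rw a" | "swKS (Kl a) = Sy a" | "swKS (Sy a) = Kl a"
fun unSy :: "'a crd \<Rightarrow> 'a" where
  "unSy (Sy a) = a" | "unSy _ = undefined"

lemma swRS_inv [simp]: "swRS (swRS z) = z" by (cases z) auto
lemma swKS_inv [simp]: "swKS (swKS z) = z" by (cases z) auto

lemma swRS_W: "X \<subseteq> WW C \<Longrightarrow> swRS ` X \<subseteq> WW C"
  unfolding WW_def by (auto elim!: swRS.elims)
lemma swKS_W: "X \<subseteq> WW C \<Longrightarrow> swKS ` X \<subseteq> WW C"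
  unfolding WW_def by (auto elim!: swKS.elims)

lemma swRS_mem: "z \<in> WW C \<Longrightarrow> swRS z \<in> WW C"
  unfolding WW_def by (cases z) auto
lemma swKS_mem: "z \<in> WW C \<Longrightarrow> swKS z \<in> WW C"
  unfolding WW_def by (cases z) auto

lemma finite_WW: "finite C \<Longrightarrow> finite (WW C)" unfolding WW_def by simp

theorem proposition4:
  fixes f :: "'a \<Rightarrow> 'a \<Rightarrow> 'a"
  assumes "quasigroup_on (UNIV :: 'a set) f"
  shows "approximable_by (discrete_topology UNIV) f finite_quasigroup"
  unfolding approximable_by_def
proof (intro allI impI)
  fix C :: "'a set" and \<U> :: "'a set set"
  assume h: "compactin (discrete_topology UNIV) C \<and> finite \<U> \<and> (\<forall>U\<in>\<U>. openin (discrete_topology UNIV) U) \<and> C \<subseteq> \<Union> \<U>"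
  then have finC: "finite C" and CU: "C \<subseteq> \<Union> \<U>" using compactin_discrete_topology by auto
  have rinj: "\<And>a b b'. f a b = f a b' \<Longrightarrow> b = b'" using assms unfolding quasigroup_on_def by blast
  have cinj: "\<And>a a' b. f a b = f a' b \<Longrightarrow> a = a'" using assms unfolding quasigroup_on_def by blast
  interpret qsetup f C using rinj cinj by unfold_locales blast+
  show "\<exists>H g j. finite_quasigroup H g \<and> finite H \<and> inj_on j H \<and> is_approximation (discrete_topology UNIV) f C \<U> H g j"
  proof (cases "finite (UNIV :: 'a set)")
    case True
    show ?thesis by (rule transfer_approx[of UNIV f id]) (use True assms CU in auto)
  next
    case False
    define G where "G = Pow (WW C)"
    define G1 where "G1 = (\<lambda>s. {Sy s}) ` C"
    have finG: "finite G" unfolding G_def using finite_WW[OF finC] by simp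
    have G1G: "G1 \<subseteq> G" unfolding G1_def G_def WW_def by auto
    have "infinite (UNIV - C)" using False finC by (metis Diff_infinite_finite)
    then obtain B where B: "finite B" "card B = card (G - G1)" "B \<subseteq> UNIV - C"
      using infinite_arbitrarily_large by blast
    have "finite (G - G1)" using finG by simp
    then obtain h where hb: "bij_betw h (G - G1) B" using B finite_same_card_bij by metis
    define J where "J x = (if x \<in> G1 then unSy (the_elem x) else h x)" for x
    have J1: "J {Sy s} = s" if "s \<in> C" for s unfolding J_def G1_def using that by auto
    have J2: "J x \<notin> C" if "x \<in> G" "x \<notin> G1" for x
      unfolding J_def using that hb B(3) by (auto dest: bij_betw_apply)
    have Jsy: "x = {Sy (J x)}" if "x \<in> G" "J x \<in> C" for x
    proof -
      have "x \<in> G1" using J2 that by blast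
      then obtain s where "s \<in> C" "x = {Sy s}" unfolding G1_def by blast
      then show ?thesis using J1 by simp
    qed
    have injJ: "inj_on J G"
    proof (rule inj_onI)
      fix x y assume xy: "x \<in> G" "y \<in> G" "J x = J y"
      show "x = y"
      proof (cases "x \<in> G1")
        case True
        then obtain s where s: "s \<in> C" "x = {Sy s}" unfolding G1_def by blast
        then have "J y \<in> C" using J1 xy by simp
        then show ?thesis using Jsy xy s J1 by metis
      next
        case False
        then have "y \<notin> G1" using xy J2 unfolding G1_def using J1 by force
        then show ?thesis using False xy hb unfolding J_def by (auto simp: bij_betw_def inj_on_def)
      qed
    qed
    have CJ: "C \<subseteq> J ` G"
    proof
      fix s assume "s \<in> C"
      then show "s \<in> J ` G" using J1 G1G unfolding G1_def by (metis image_eqI image_subset_iff)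
    qed
    define q where "q x y = LL f C (swRS ` x) (swKS ` y)" for x y
    have qq: "quasigroup_on G q" unfolding q_def G_def
      by (rule isotope_quasi[OF LL_quasi]) (auto simp: image_image intro!: swRS_mem swKS_mem)
    show ?thesis
    proof (rule transfer_approx[OF finG qq injJ CJ CU])
      fix x y assume xy: "x \<in> G" "y \<in> G" "J x \<in> C" "J y \<in> C" "f (J x) (J y) \<in> C"
      have x: "x = {Sy (J x)}" and y: "y = {Sy (J y)}" using Jsy xy by auto
      have "q x y = LL f C {Rw (J x)} {Kl (J y)}" unfolding q_def by (subst x, subst y) simp
      also have "\<dots> = {Sy (f (J x) (J y))}" using LL_val xy by blast
      finally show "J (q x y) = f (J x) (J y)" using J1 xy by simp
    qed
  qed
qed

end
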